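(* Let $p>1$. Then for all $0\le\eta\le1$, $$\psi\!\left(-\frac1p,\eta^{p/(p-1)}\right)=\psi\!\left(\frac1{p-1},\eta\right),$$ where for $\beta>-1$, $\beta\neq0$, and $0\le\eta\le1$, $$\psi(\beta,\eta)=\begin{cases}\dfrac{(1+\eta^{\beta+1})^{1/\beta}}{(1+\eta)^{(\beta+1)/\beta}}+\dfrac{(\beta+1)^{(\beta+1)/\beta}}{\beta}\left[\dfrac1{1+\eta^{\beta+1}}-\dfrac1{1+\eta}\right], & 0\le\eta\le\eta_1(\beta),\\[2ex] 2\dfrac{(1+\eta^{\beta+1})^{1/\beta}}{(1+\eta)^{(\beta+1)/\beta}}, & \eta_1(\beta)\le\eta\le1,\end{cases}$$ and $\eta_1(\beta)\in(0,1)$ is the root of the equation $\eta^\beta=\dfrac{1}{1+\beta(\eta+1)}$. *)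

theory Defs
  imports Complex_Main
begin

definition eta1 :: "real \<Rightarrow> real" where
  "eta1 \<beta> = (THE \<eta>. 0 < \<eta> \<and> \<eta> < 1 \<and> \<eta> powr \<beta> = 1 / (1 + \<beta> * (\<eta> + 1)))"

definition psi :: "real \<Rightarrow> real \<Rightarrow> real" where
  "psi \<beta> \<eta> =
     (if \<eta> \<le> eta1 \<beta> then
        (1 + \<eta> powr (\<beta> + 1)) powr (1 / \<beta>) / (1 + \<eta>) powr ((\<beta> + 1) / \<beta>)
        + ((\<beta> + 1) powr ((\<beta> + 1) / \<beta>) / \<beta>)
          * (1 / (1 + \<eta> powr (\<beta> + 1)) - 1 / (1 + \<eta>))
      else
        2 * ((1 + \<eta> powr (\<beta> + 1)) powr (1 / \<beta>) / (1 + \<eta>) powr ((\<beta> + 1) / \<beta>)))"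

end

theory Submission
  imports Defs
begin

lemma gam_root:
  fixes p :: real assumes p: "p > 1"
  shows "\<exists>!x. 0 < x \<and> x < 1 \<and> x powr (1/(p-1)) = 1 / (1 + (1/(p-1)) * (x + 1))"
proof -
  define g where "g = 1/(p-1)"
  have g: "g > 0" using p by (simp add: g_def)
  have eqv: "x powr g = 1 / (1 + g * (x + 1)) \<longleftrightarrow> (p + x) * x powr g = p - 1" if "0 < x" for x
  proof -
    have e: "1 + g * (x + 1) = (p + x) / (p - 1)" using p by (simp add: g_def field_simps)
    have "p + x > 0" using p that by simp
    hence "1 / (1 + g * (x + 1)) = (p - 1) / (p + x)" unfolding e by simp
    moreover have "x powr g = (p - 1) / (p + x) \<longleftrightarrow> (p + x) * x powr g = p - 1"
      using \<open>p + x > 0\<close> by (metis eq_divide_eq less_irrefl mult.commute)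
    ultimately show ?thesis by simp
  qed
  define f where "f x = (p + x) * x powr g" for x
  have cont: "continuous_on {0..1} f" unfolding f_def
    using g by (intro continuous_intros continuous_on_powr') auto
  have f0: "f 0 \<le> p - 1" using p by (simp add: f_def)
  have f1: "p - 1 \<le> f 1" using p by (simp add: f_def)
  obtain x where x: "0 \<le> x" "x \<le> 1" "f x = p - 1"
    using IVT'[of f 0 "p-1" 1, OF f0 f1 _ cont] by auto
  have "x \<noteq> 0" using x p g by (auto simp: f_def)
  moreover have "x \<noteq> 1" using x p by (auto simp: f_def)
  ultimately have xx: "0 < x" "x < 1" using x by auto
  have mono: "f a < f b" if "0 < a" "a < b" for a b
  proof -
    have "a powr g < b powr g" using that g by (simp add: powr_less_mono2)
    moreover have "p + a < p + b" using that by simp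
    moreover have "0 < a powr g" using that by simp
    moreover have "0 < p + a" using that p by simp
    ultimately show ?thesis unfolding f_def by (intro mult_strict_mono) auto
  qed
  show ?thesis
  proof (rule ex1I[of _ x])
    show "0 < x \<and> x < 1 \<and> x powr (1/(p-1)) = 1 / (1 + (1/(p-1)) * (x + 1))"
      using xx x eqv[of x] by (simp add: f_def g_def)
  next
    fix y assume y: "0 < y \<and> y < 1 \<and> y powr (1/(p-1)) = 1 / (1 + (1/(p-1)) * (y + 1))"
    hence fy: "f y = p - 1" using eqv[of y] by (simp add: f_def g_def)
    show "y = x"
    proof (rule ccontr)
      assume "y \<noteq> x"
      hence "y < x \<or> x < y" by auto
      thus False using mono[of y x] mono[of x y] fy x xx y by auto
    qed
  qed
qed

lemma geq:
  fixes p x :: real assumes p: "p > 1" and x: "0 < x"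
  shows "x powr (1/(p-1)) = 1 / (1 + (1/(p-1)) * (x + 1)) \<longleftrightarrow> (p + x) * x powr (1/(p-1)) = p - 1"
proof -
  define g where "g = 1/(p-1)"
  have e: "1 + g * (x + 1) = (p + x) / (p - 1)" using p by (simp add: g_def field_simps)
  have "p + x > 0" using p x by simp
  hence "1 / (1 + g * (x + 1)) = (p - 1) / (p + x)" unfolding e by simp
  moreover have "x powr g = (p - 1) / (p + x) \<longleftrightarrow> (p + x) * x powr g = p - 1"
    using \<open>p + x > 0\<close> by (metis eq_divide_eq less_irrefl mult.commute)
  ultimately show ?thesis unfolding g_def by simp
qed

lemma beq:
  fixes p x :: real assumes p: "p > 1" and x: "0 < x"
  shows "x powr (-1/p) = 1 / (1 + (-1/p) * (x + 1)) \<longleftrightarrow> p * x powr (1/p) + x = p - 1"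
proof -
  have a: "x powr (-1/p) = 1 / x powr (1/p)"
    by (simp add: powr_minus divide_inverse)
  have d: "1 + (-1/p) * (x + 1) = (p - 1 - x) / p" using p by (simp add: field_simps)
  have "x powr (-1/p) = 1 / (1 + (-1/p) * (x + 1)) \<longleftrightarrow> x powr (1/p) = (p - 1 - x) / p"
    unfolding a d by (metis inverse_eq_divide inverse_inverse_eq)
  also have "\<dots> \<longleftrightarrow> p * x powr (1/p) + x = p - 1" using p by (auto simp: field_simps)
  finally show ?thesis .
qed

lemma link:
  fixes p x :: real assumes p: "p > 1" and x: "0 < x"
  shows "p * (x powr (p/(p-1))) powr (1/p) + x powr (p/(p-1)) = (p + x) * x powr (1/(p-1))"
proof -
  have "(x powr (p/(p-1))) powr (1/p) = x powr (1/(p-1))"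
    using p by (simp add: powr_powr)
  moreover have "x powr (p/(p-1)) = x powr (1 + 1/(p-1))"
    using p by (simp add: field_simps)
  moreover have "x powr (1 + 1/(p-1)) = x * x powr (1/(p-1))"
    using x by (simp add: powr_add)
  ultimately show ?thesis by (simp add: algebra_simps)
qed

lemma eta1_rel:
  fixes p :: real assumes p: "p > 1"
  shows "eta1 (-1/p) = eta1 (1/(p-1)) powr (p/(p-1)) \<and> 0 < eta1 (1/(p-1)) \<and> eta1 (1/(p-1)) < 1"
proof -
  define r where "r = eta1 (1/(p-1))"
  have r: "0 < r \<and> r < 1 \<and> r powr (1/(p-1)) = 1 / (1 + (1/(p-1)) * (r + 1))"
    unfolding r_def eta1_def using theI'[OF gam_root[OF p]] by simp
  have q: "p/(p-1) > 0" using p by simp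
  have "eta1 (-1/p) = r powr (p/(p-1))"
    unfolding eta1_def
  proof (rule the_equality)
    have "0 < r powr (p/(p-1))" using r by simp
    moreover have "r powr (p/(p-1)) < 1"
      using r q by (metis powr_less_mono2 powr_one_eq_one less_imp_le)
    moreover have "(r powr (p/(p-1))) powr (-1/p) = 1 / (1 + (-1/p) * (r powr (p/(p-1)) + 1))"
      using beq[OF p, of "r powr (p/(p-1))"] link[OF p, of r] geq[OF p, of r] r by simp
    ultimately show "0 < r powr (p/(p-1)) \<and> r powr (p/(p-1)) < 1 \<and>
      (r powr (p/(p-1))) powr (-1/p) = 1 / (1 + (-1/p) * (r powr (p/(p-1)) + 1))" by simp
  next
    fix y assume y: "0 < y \<and> y < 1 \<and> y powr (-1/p) = 1 / (1 + (-1/p) * (y + 1))"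
    define e where "e = y powr ((p-1)/p)"
    have ye: "y = e powr (p/(p-1))" unfolding e_def using p y by (simp add: powr_powr)
    have e0: "0 < e" using y by (simp add: e_def)
    have e1: "e < 1" unfolding e_def using y p
      by (metis powr_less_mono2 powr_one_eq_one less_imp_le divide_pos_pos diff_gt_0_iff_gt less_trans zero_less_one)
    have "e powr (1/(p-1)) = 1 / (1 + (1/(p-1)) * (e + 1))"
      using beq[OF p, of y] y link[OF p e0] geq[OF p e0] ye by simp
    hence "e = r" using gam_root[OF p] r e0 e1 by blast
    thus "y = r powr (p/(p-1))" using ye by simp
  qed
  thus ?thesis using r r_def by simp
qed

theorem corollary2p2:
  fixes p \<eta> :: real
  assumes "p > 1" and "0 \<le> \<eta>" and "\<eta> \<le> 1"
  shows "psi (- 1 / p) (\<eta> powr (p / (p - 1))) = psi (1 / (p - 1)) \<eta>"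
proof -
  note p = assms(1) and h0 = assms(2)
  define q where "q = p/(p-1)"
  define b where "b = - 1 / p"
  define g where "g = 1/(p-1)"
  define r where "r = eta1 g"
  have q0: "q > 0" using p by (simp add: q_def)
  have R: "eta1 b = r powr q" "0 < r" "r < 1"
    using eta1_rel[OF p] unfolding b_def r_def g_def q_def by auto
  have cond: "\<eta> powr q \<le> r powr q \<longleftrightarrow> \<eta> \<le> r"
  proof
    assume "\<eta> powr q \<le> r powr q"
    thus "\<eta> \<le> r" using powr_less_mono2[OF q0 R(2)[THEN less_imp_le], of \<eta>] by fastforce
  next
    assume "\<eta> \<le> r" thus "\<eta> powr q \<le> r powr q" using powr_mono2 q0 h0 by simp
  qed
  have x1: "(\<eta> powr q) powr (b + 1) = \<eta>"
  proof -
    have "q * (b + 1) = 1" using p by (simp add: q_def b_def field_simps)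
    thus ?thesis using h0 by (simp add: powr_powr)
  qed
  have x2: "\<eta> powr (g + 1) = \<eta> powr q"
  proof -
    have "g + 1 = q" using p by (simp add: q_def g_def field_simps)
    thus ?thesis by simp
  qed
  have e1: "1 / b = - p" "(b + 1) / b = - (p - 1)" "1 / g = p - 1" "(g + 1) / g = p"
    "g + 1 = q" "b + 1 = inverse q"
    using p by (simp_all add: q_def b_def g_def field_simps)
  have A: "(1 + (\<eta> powr q) powr (b + 1)) powr (1 / b) / (1 + \<eta> powr q) powr ((b + 1) / b)
        = (1 + \<eta> powr (g + 1)) powr (1 / g) / (1 + \<eta>) powr ((g + 1) / g)"
  proof -
    have "inverse ((1 + \<eta> powr q) powr (1 - p)) = (1 + \<eta> powr q) powr (p - 1)"
      using powr_minus[of "1 + \<eta> powr q" "p - 1"] by simp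
    thus ?thesis unfolding x1 x2 e1(1,2,3,4) by (simp add: powr_minus divide_inverse)
  qed
  have B: "(b + 1) powr ((b + 1) / b) / b = - ((g + 1) powr ((g + 1) / g) / g)"
  proof -
    have "(b + 1) powr ((b + 1) / b) = q powr (p - 1)"
    proof -
      have "(b + 1) powr ((b + 1) / b) = (inverse q) powr (- (p - 1))"
        by (subst e1(2), subst e1(6), rule refl)
      also have "\<dots> = q powr (p - 1)" using powr_minus[of q "p - 1"] by (simp add: powr_minus inverse_powr)
      finally show ?thesis .
    qed
    moreover have "(g + 1) powr ((g + 1) / g) = q powr (p - 1) * q"
    proof -
      have "(g + 1) powr ((g + 1) / g) = q powr ((p - 1) + 1)"
        by (subst e1(4), subst e1(5), simp)
      also have "\<dots> = q powr (p - 1) * q" using q0 powr_add[of q "p - 1" 1] by simp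
      finally show ?thesis .
    qed
    ultimately show ?thesis using p by (simp add: b_def g_def q_def field_simps)
  qed
  have C: "1 / (1 + (\<eta> powr q) powr (b + 1)) - 1 / (1 + \<eta> powr q)
        = - (1 / (1 + \<eta> powr (g + 1)) - 1 / (1 + \<eta>))"
    unfolding x1 x2 by simp
  have D: "(b + 1) powr ((b + 1) / b) / b * (1 / (1 + (\<eta> powr q) powr (b + 1)) - 1 / (1 + \<eta> powr q))
     = (g + 1) powr ((g + 1) / g) / g * (1 / (1 + \<eta> powr (g + 1)) - 1 / (1 + \<eta>))"
    unfolding B C by (metis minus_diff_eq mult_minus_right minus_divide_left mult_minus_left)
  show ?thesis
    unfolding b_def[symmetric] g_def[symmetric] q_def[symmetric] psi_def R(1) r_def[symmetric] cond
    unfolding A D by simp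
qed

end
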